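(* Let $n>1$ and let $a_1,\dots,a_n$ be regular closed subsets of $\mathbb{R}^2$ such that $\mathrm{int}(a_i\cup\dots\cup a_n)$ is connected for each $1\le i\le n$, $a_i\cdot a_j=\emptyset$ for all $1\le i<j\le n$, and $a_i\cap a_j=\emptyset$ for all $1\le i<j\le n$ with $j-i>1$. Then every point $p_1\in\mathrm{int}(a_1)$ can be connected to every point $p_n\in\mathrm{int}(a_n)$ by a Jordan arc $\alpha=\alpha_1\cdots\alpha_{n-1}$ such that, for all $1\le i<n$, $\alpha_i$ is a non-degenerate Jordan arc in $\mathrm{int}(a_i\cup a_{i+1})$ starting at a point $p_i\in\mathrm{int}(a_i)$.
   Context: $a\cdot b$ denotes $\overline{\mathrm{int}(a\cap b)}$. A Jordan arc is a continuous injective map $[0,1]\to\mathbb{R}^2$ (non-degenerate) or a constant map (degenerate), identified with its image. $\alpha=\alpha_1\cdots\alpha_{n-1}$ denotes a Jordan arc from $p_1$ to $p_n$ that is the concatenation of the arcs $\alpha_1,\dots,\alpha_{n-1}$ in order, each $\alpha_i$ ending where $\alpha_{i+1}$ begins. *)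

theory Defs
  imports "HOL-Analysis.Analysis"
begin

definition regular_closed :: "'a::topological_space set \<Rightarrow> bool" where
  "regular_closed A \<longleftrightarrow> closure (interior A) = A"

text \<open>The product a \<cdot> b = closure of the interior of a \<inter> b.\<close>
definition rc_meet :: "'a::topological_space set \<Rightarrow> 'a set \<Rightarrow> 'a set" where
  "rc_meet a b = closure (interior (a \<inter> b))"

fun joinpaths_list :: "(real \<Rightarrow> 'a::topological_space) list \<Rightarrow> real \<Rightarrow> 'a" where
  "joinpaths_list [] = (\<lambda>_. undefined)"
| "joinpaths_list [g] = g"
| "joinpaths_list (g # gs) = g +++ joinpaths_list gs"

end

theory Submission
  imports Defs
begin


lemma jl_cons: "xs \<noteq> [] \<Longrightarrow> joinpaths_list (x # xs) = x +++ joinpaths_list xs"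
  by (cases xs) auto

lemma jl_props:
  assumes "i < n" "\<forall>j\<in>{i..<n}. arc (g j) \<and> pathstart (g j) = p j \<and> pathfinish (g j) = p (Suc j)"
    "\<forall>j. i \<le> j \<and> Suc j < n \<longrightarrow> path_image (g j) \<inter> path_image (g (Suc j)) \<subseteq> {p (Suc j)}"
    "\<forall>j k. i \<le> j \<and> Suc j < k \<and> k < n \<longrightarrow> path_image (g j) \<inter> path_image (g k) = {}"
  shows "arc (joinpaths_list (map g [i..<n])) \<and> pathstart (joinpaths_list (map g [i..<n])) = p i
     \<and> pathfinish (joinpaths_list (map g [i..<n])) = p n
     \<and> path_image (joinpaths_list (map g [i..<n])) = (\<Union>j\<in>{i..<n}. path_image (g j))"
  using assms
proof (induction "n - Suc i" arbitrary: i)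
  case 0
  then have "n = Suc i" by simp
  then show ?case using 0 by simp
next
  case (Suc d)
  then have lt: "Suc i < n" by simp
  have IH: "arc (joinpaths_list (map g [Suc i..<n])) \<and> pathstart (joinpaths_list (map g [Suc i..<n])) = p (Suc i)
     \<and> pathfinish (joinpaths_list (map g [Suc i..<n])) = p n
     \<and> path_image (joinpaths_list (map g [Suc i..<n])) = (\<Union>j\<in>{Suc i..<n}. path_image (g j))"
    apply (rule Suc.hyps(1)) using Suc.hyps(2) Suc.prems lt by auto
  have eq: "map g [i..<n] = g i # map g [Suc i..<n]" using lt by (simp add: upt_conv_Cons)
  have ne: "map g [Suc i..<n] \<noteq> []" using lt by simp
  have gi: "arc (g i)" "pathstart (g i) = p i" "pathfinish (g i) = p (Suc i)" using Suc.prems by auto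
  have inter: "path_image (g i) \<inter> (\<Union>j\<in>{Suc i..<n}. path_image (g j)) \<subseteq> {p (Suc i)}"
  proof clarify
    fix x j assume x: "x \<in> path_image (g i)" "j \<in> {Suc i..<n}" "x \<in> path_image (g j)"
    show "x = p (Suc i)"
    proof (cases "j = Suc i")
      case True then show ?thesis using Suc.prems(3) x lt by auto
    next
      case False then have "Suc i < j" using x by auto
      then show ?thesis using Suc.prems(4) x by auto
    qed
  qed
  have ins: "{i..<n} = insert i {Suc i..<n}" using lt by auto
  show ?case unfolding eq jl_cons[OF ne]
    using IH gi inter
    apply (intro conjI)
    apply (rule arc_join) apply auto[4]
    apply simp apply simp
    apply (subst path_image_join) apply simp
    using ins by simp
qed
lemma comp_lemma:
  fixes A B C :: "'a::euclidean_space set"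
  assumes "closed A" "closed C" "A \<inter> C = {}" "connected (interior (A \<union> B \<union> C))"
    "x \<in> interior A" "q \<in> interior (A \<union> B \<union> C)" "q \<notin> interior A"
    "interior A \<inter> interior B = {}"
  shows "\<exists>h y. arc h \<and> pathstart h = x \<and> pathfinish h = y \<and> y \<in> interior B
          \<and> path_image h \<subseteq> interior (A \<union> B)"
proof -
  define Ob where "Ob = interior (A \<union> B)"
  define W where "W = connected_component_set Ob x"
  define U where "U = interior (A \<union> B \<union> C)"
  have xO: "x \<in> Ob" unfolding Ob_def using assms(5) interior_mono[of A "A \<union> B"] by auto
  have OU: "Ob \<subseteq> U" unfolding Ob_def U_def by (rule interior_mono) auto
  have Wo: "open W" unfolding W_def Ob_def by (simp add: open_connected_component)
  have WO: "W \<subseteq> Ob" unfolding W_def by (rule connected_component_subset)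
  have xW: "x \<in> W" unfolding W_def using xO by simp
  have "\<exists>y\<in>interior B. y \<in> W"
  proof (rule ccontr)
    assume H: "\<not> (\<exists>y\<in>interior B. y \<in> W)"
    have WA: "W \<subseteq> A"
    proof
      fix w assume w: "w \<in> W"
      show "w \<in> A"
      proof (rule ccontr)
        assume "w \<notin> A"
        have "open (W - A)" using Wo assms(1) by auto
        moreover have "W - A \<subseteq> B" using WO interior_subset[of "A \<union> B"] unfolding Ob_def by auto
        ultimately have "W - A \<subseteq> interior B" by (rule interior_maximal[rotated])
        then show False using H w \<open>w \<notin> A\<close> by auto
      qed
    qed
    have WiA: "W \<subseteq> interior A" using WA Wo by (rule interior_maximal)
    have opn: "openin (top_of_set U) W" unfolding openin_open using Wo WO OU by auto
    have cls: "closedin (top_of_set U) W" unfolding closedin_closed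
    proof (intro exI conjI)
      show "closed (closure W)" by simp
      have "U \<inter> closure W \<subseteq> W"
      proof
        fix z assume z: "z \<in> U \<inter> closure W"
        have zA: "z \<in> A" using z closure_minimal[OF WA assms(1)] by auto
        then have zC: "z \<notin> C" using assms(3) by auto
        have "open (U - C)" unfolding U_def using assms(2) by auto
        then obtain e where e: "e > 0" "ball z e \<subseteq> U - C" using z zC by (meson DiffI IntD1 open_contains_ball)
        have "ball z e \<subseteq> A \<union> B" using e(2) interior_subset[of "A \<union> B \<union> C"] unfolding U_def by auto
        then have bO: "ball z e \<subseteq> Ob" unfolding Ob_def by (simp add: interior_maximal)
        obtain w where w: "w \<in> W" "dist w z < e" using z e(1) by (meson IntD2 closure_approachable)
        have wb: "w \<in> ball z e" using w by (simp add: dist_commute)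
        have "ball z e \<subseteq> connected_component_set Ob w"
          by (rule connected_component_maximal[OF wb connected_ball bO])
        also have "\<dots> = W" unfolding W_def using w(1) unfolding W_def by (rule connected_component_eq)
        finally show "z \<in> W" using e(1) by auto
      qed
      then show "W = U \<inter> closure W" using WO OU closure_subset[of W] by auto
    qed
    have "W = U" using connected_clopen[THEN iffD1, OF assms(4)[folded U_def], rule_format, of W] opn cls xW by auto
    then show False using assms(6,7) WiA unfolding U_def by auto
  qed
  then obtain y where y: "y \<in> interior B" "y \<in> W" by blast
  have xy: "x \<noteq> y" using y(1) assms(5,8) by auto
  have "path_connected W" unfolding W_def
    using open_path_connected_component[of Ob x] Ob_def path_connected_path_component by (metis open_interior)
  then obtain h where "arc h" "path_image h \<subseteq> W" "pathstart h = x" "pathfinish h = y"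
    using path_connected_arcwise[THEN iffD1, rule_format, OF _ xW y(2) xy] by blast
  then show ?thesis using y WO unfolding Ob_def by blast
qed
lemma rc_closed: "regular_closed A \<Longrightarrow> closed A"
  unfolding regular_closed_def by (metis closed_closure)

lemma open_meet_empty: "open V \<Longrightarrow> V \<subseteq> a \<inter> b \<Longrightarrow> rc_meet a b = {} \<Longrightarrow> V = {}"
proof -
  assume h: "open V" "V \<subseteq> a \<inter> b" "rc_meet a b = {}"
  have "V \<subseteq> interior (a \<inter> b)" using h(1,2) by (simp add: interior_maximal)
  also have "\<dots> \<subseteq> closure (interior (a \<inter> b))" by (rule closure_subset)
  finally show "V = {}" using h(3) unfolding rc_meet_def by simp
qed

theorem lemma5p3:
  fixes a :: "nat \<Rightarrow> (real^2) set" and n :: nat and q1 qn :: "real^2"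
  assumes "n > 1"
    and "\<forall>i\<in>{1..n}. regular_closed (a i)"
    and "\<forall>i\<in>{1..n}. connected (interior (\<Union>j\<in>{i..n}. a j))"
    and "\<forall>i j. 1 \<le> i \<and> i < j \<and> j \<le> n \<longrightarrow> rc_meet (a i) (a j) = {}"
    and "\<forall>i j. 1 \<le> i \<and> i < j \<and> j \<le> n \<and> j - i > 1 \<longrightarrow> a i \<inter> a j = {}"
    and "q1 \<in> interior (a 1)" and "qn \<in> interior (a n)"
  shows "\<exists>(g :: nat \<Rightarrow> real \<Rightarrow> real^2) (p :: nat \<Rightarrow> real^2).
           p 1 = q1 \<and> p n = qn \<and>
           arc (joinpaths_list (map g [1..<n])) \<and>
           (\<forall>i\<in>{1..<n}. arc (g i) \<and> pathstart (g i) = p i \<and> pathfinish (g i) = p (Suc i)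
                         \<and> p i \<in> interior (a i)
                         \<and> path_image (g i) \<subseteq> interior (a i \<union> a (Suc i)))"
proof -
  note n1 = assms(1) and rc = assms(2) and conn = assms(3) and meet = assms(4) and dis0 = assms(5)
    and q1 = assms(6) and qn = assms(7)
  have cl: "\<And>j. 1 \<le> j \<Longrightarrow> j \<le> n \<Longrightarrow> closed (a j)" by (meson atLeastAtMost_iff rc rc_closed)
  have meetE: "\<And>V j k. open V \<Longrightarrow> V \<subseteq> a j \<inter> a k \<Longrightarrow> 1 \<le> j \<Longrightarrow> j < k \<Longrightarrow> k \<le> n \<Longrightarrow> V = {}"
  proof -
    fix V j k assume h: "open V" "V \<subseteq> a j \<inter> a k" "1 \<le> j" "j < k" "k \<le> n"
    have "rc_meet (a j) (a k) = {}" using meet h(3,4,5) by blast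
    then show "V = {}" by (rule open_meet_empty[OF h(1,2)])
  qed
  have dis: "\<And>j k. 1 \<le> j \<Longrightarrow> j + 1 < k \<Longrightarrow> k \<le> n \<Longrightarrow> a j \<inter> a k = {}"
  proof -
    fix j k assume h: "1 \<le> j" "j + 1 < k" "k \<le> n"
    then have "1 \<le> j \<and> j < k \<and> k \<le> n \<and> k - j > 1" by auto
    then show "a j \<inter> a k = {}" using dis0 by blast
  qed
  have intA: "\<And>j k. 1 \<le> j \<Longrightarrow> j < k \<Longrightarrow> k \<le> n \<Longrightarrow> interior (a j) \<inter> interior (a k) = {}"
  proof -
    fix j k assume h: "1 \<le> j" "j < k" "k \<le> n"
    show "interior (a j) \<inter> interior (a k) = {}"
      by (rule meetE[OF _ _ h]) (use interior_subset in auto)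
  qed
  have F2: "\<And>j k. 1 \<le> j \<Longrightarrow> j + 2 \<le> k \<Longrightarrow> Suc k \<le> n \<Longrightarrow>
      interior (a j \<union> a (Suc j)) \<inter> interior (a k \<union> a (Suc k)) = {}"
  proof -
    fix j k assume h: "1 \<le> j" "j + 2 \<le> k" "Suc k \<le> n"
    have d: "a j \<inter> a k = {}" "a j \<inter> a (Suc k) = {}" "a (Suc j) \<inter> a (Suc k) = {}"
      using dis h by auto
    have o: "open (interior (a j \<union> a (Suc j)) \<inter> interior (a k \<union> a (Suc k)))" by auto
    have sub: "interior (a j \<union> a (Suc j)) \<inter> interior (a k \<union> a (Suc k)) \<subseteq> a (Suc j) \<inter> a k"
      using d interior_subset[of "a j \<union> a (Suc j)"] interior_subset[of "a k \<union> a (Suc k)"] by blast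
    show "interior (a j \<union> a (Suc j)) \<inter> interior (a k \<union> a (Suc k)) = {}"
      by (rule meetE[OF o sub]) (use h in auto)
  qed
  have F3: "\<And>i. 1 \<le> i \<Longrightarrow> i + 2 \<le> n \<Longrightarrow>
      interior (a i \<union> a (Suc i)) \<inter> interior (a (Suc i) \<union> a (Suc (Suc i))) \<subseteq> interior (a (Suc i))"
  proof -
    fix i assume h: "1 \<le> i" "i + 2 \<le> n"
    have d: "a i \<inter> a (Suc (Suc i)) = {}" using dis h by auto
    have o: "open (interior (a i \<union> a (Suc i)) \<inter> interior (a (Suc i) \<union> a (Suc (Suc i))))" by auto
    have sub: "interior (a i \<union> a (Suc i)) \<inter> interior (a (Suc i) \<union> a (Suc (Suc i))) \<subseteq> a (Suc i)"
      using d interior_subset[of "a i \<union> a (Suc i)"] interior_subset[of "a (Suc i) \<union> a (Suc (Suc i))"] by blast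
    show "interior (a i \<union> a (Suc i)) \<inter> interior (a (Suc i) \<union> a (Suc (Suc i))) \<subseteq> interior (a (Suc i))"
      using o sub by (simp add: interior_maximal)
  qed
  have F4: "\<And>i. 1 \<le> i \<Longrightarrow> i + 2 \<le> n \<Longrightarrow> interior (a i) \<inter> interior (a (Suc i) \<union> a (Suc (Suc i))) = {}"
  proof -
    fix i assume h: "1 \<le> i" "i + 2 \<le> n"
    have d: "a i \<inter> a (Suc (Suc i)) = {}" using dis h by auto
    have o: "open (interior (a i) \<inter> interior (a (Suc i) \<union> a (Suc (Suc i))))" by auto
    have sub: "interior (a i) \<inter> interior (a (Suc i) \<union> a (Suc (Suc i))) \<subseteq> a i \<inter> a (Suc i)"
      using d interior_subset[of "a i"] interior_subset[of "a (Suc i) \<union> a (Suc (Suc i))"] by blast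
    show "interior (a i) \<inter> interior (a (Suc i) \<union> a (Suc (Suc i))) = {}"
      by (rule meetE[OF o sub]) (use h in auto)
  qed
  have F5: "\<And>i. 1 \<le> i \<Longrightarrow> i + 2 \<le> n \<Longrightarrow> interior (a (Suc (Suc i))) \<inter> interior (a i \<union> a (Suc i)) = {}"
  proof -
    fix i assume h: "1 \<le> i" "i + 2 \<le> n"
    have d: "a i \<inter> a (Suc (Suc i)) = {}" using dis h by auto
    have o: "open (interior (a (Suc (Suc i))) \<inter> interior (a i \<union> a (Suc i)))" by auto
    have sub: "interior (a (Suc (Suc i))) \<inter> interior (a i \<union> a (Suc i)) \<subseteq> a (Suc i) \<inter> a (Suc (Suc i))"
      using d interior_subset[of "a (Suc (Suc i))"] interior_subset[of "a i \<union> a (Suc i)"] by blast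
    show "interior (a (Suc (Suc i))) \<inter> interior (a i \<union> a (Suc i)) = {}"
      by (rule meetE[OF o sub]) (use h in auto)
  qed
  have step: "\<And>i x. 1 \<le> i \<Longrightarrow> Suc i < n \<Longrightarrow> x \<in> interior (a i) \<Longrightarrow>
     \<exists>h y. arc h \<and> pathstart h = x \<and> pathfinish h = y \<and> y \<in> interior (a (Suc i))
          \<and> path_image h \<subseteq> interior (a i \<union> a (Suc i))"
  proof -
    fix i x assume h: "1 \<le> i" "Suc i < n" "x \<in> interior (a i)"
    have iv: "{i..n} = insert i (insert (Suc i) {Suc (Suc i)..n})" using h by auto
    have un: "(\<Union>j\<in>{i..n}. a j) = a i \<union> a (Suc i) \<union> (\<Union>j\<in>{Suc (Suc i)..n}. a j)"
      unfolding iv by auto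
    show "?thesis i x"
    proof (rule comp_lemma[where C = "\<Union>j\<in>{Suc (Suc i)..n}. a j" and q = qn])
      show "closed (a i)" using cl h by auto
      show "closed (\<Union>j\<in>{Suc (Suc i)..n}. a j)" using cl h by (intro closed_UN) auto
      show "a i \<inter> (\<Union>j\<in>{Suc (Suc i)..n}. a j) = {}"
      proof -
        have "\<And>j. j \<in> {Suc (Suc i)..n} \<Longrightarrow> a i \<inter> a j = {}" using dis h(1) by simp
        then show ?thesis by blast
      qed
      show "connected (interior (a i \<union> a (Suc i) \<union> (\<Union>j\<in>{Suc (Suc i)..n}. a j)))"
      proof -
        have "i \<in> {1..n}" using h by auto
        then have "connected (interior (\<Union>j\<in>{i..n}. a j))" using conn by blast
        then show ?thesis using un by simp
      qed
      show "x \<in> interior (a i)" by (rule h(3))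
      have "interior (a n) \<subseteq> interior (\<Union>j\<in>{i..n}. a j)" by (intro interior_mono UN_upper) (use h in auto)
      then show "qn \<in> interior (a i \<union> a (Suc i) \<union> (\<Union>j\<in>{Suc (Suc i)..n}. a j))" using qn un by auto
      show "qn \<notin> interior (a i)" using intA[of i n] h qn by auto
      show "interior (a i) \<inter> interior (a (Suc i)) = {}" using intA[of i "Suc i"] h by auto
    qed
  qed
  have Q: "\<exists>g p. p i = x \<and> p n = qn \<and>
       (\<forall>j\<in>{i..<n}. arc (g j) \<and> pathstart (g j) = p j \<and> pathfinish (g j) = p (Suc j)
          \<and> p j \<in> interior (a j) \<and> path_image (g j) \<subseteq> interior (a j \<union> a (Suc j))) \<and>
       (\<forall>j. i \<le> j \<and> Suc j < n \<longrightarrow> path_image (g j) \<inter> path_image (g (Suc j)) \<subseteq> {p (Suc j)})"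
    if "1 \<le> i" "i < n" "x \<in> interior (a i)" for i x
    using that
  proof (induction "n - Suc i" arbitrary: i x)
    case 0
    then have nS: "n = Suc i" by simp
    have "{i..n} = {i, Suc i}" using nS by auto
    then have un: "(\<Union>j\<in>{i..n}. a j) = a i \<union> a (Suc i)" by simp
    have "i \<in> {1..n}" using 0 by auto
    then have "connected (interior (\<Union>j\<in>{i..n}. a j))" using conn by blast
    then have "connected (interior (a i \<union> a (Suc i)))" using un by simp
    then have pc: "path_connected (interior (a i \<union> a (Suc i)))"
      by (simp add: connected_open_path_connected)
    have xin: "x \<in> interior (a i \<union> a (Suc i))" using 0 interior_mono[of "a i" "a i \<union> a (Suc i)"] by auto
    have qin: "qn \<in> interior (a i \<union> a (Suc i))" using qn nS interior_mono[of "a (Suc i)" "a i \<union> a (Suc i)"] by auto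
    have xq: "x \<noteq> qn" using intA[of i n] 0 qn by auto
    obtain h where hh: "arc h" "path_image h \<subseteq> interior (a i \<union> a (Suc i))" "pathstart h = x" "pathfinish h = qn"
      using path_connected_arcwise[THEN iffD1, rule_format, OF pc xin qin xq] by blast
    show ?case
      apply (rule exI[of _ "\<lambda>_. h"], rule exI[of _ "\<lambda>j. if j = i then x else qn"])
      using hh nS 0 by auto
  next
    case (Suc d)
    then have lt: "Suc i < n" by simp
    obtain h y where hy: "arc h" "pathstart h = x" "pathfinish h = y" "y \<in> interior (a (Suc i))"
      "path_image h \<subseteq> interior (a i \<union> a (Suc i))" using step[OF Suc.prems(1) lt Suc.prems(3)] by blast
    obtain g p where gp: "p (Suc i) = y" "p n = qn"
      "\<forall>j\<in>{Suc i..<n}. arc (g j) \<and> pathstart (g j) = p j \<and> pathfinish (g j) = p (Suc j)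
          \<and> p j \<in> interior (a j) \<and> path_image (g j) \<subseteq> interior (a j \<union> a (Suc j))"
      "\<forall>j. Suc i \<le> j \<and> Suc j < n \<longrightarrow> path_image (g j) \<inter> path_image (g (Suc j)) \<subseteq> {p (Suc j)}"
    proof -
      have dd: "d = n - Suc (Suc i)" using Suc.hyps(2) by simp
      have o1: "1 \<le> Suc i" by simp
      show ?thesis using Suc.hyps(1)[OF dd o1 lt hy(4)] that by blast
    qed
    define S where "S = path_image (g (Suc i))"
    have gS: "arc (g (Suc i))" "pathstart (g (Suc i)) = y" "pathfinish (g (Suc i)) = p (Suc (Suc i))"
      "S \<subseteq> interior (a (Suc i) \<union> a (Suc (Suc i)))"
      using gp lt unfolding S_def by auto
    have cS: "closed S" unfolding S_def using gS(1) by (simp add: arc_imp_path closed_path_image)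
    define T where "T = {0..1} \<inter> h -` S"
    have "continuous_on {0..1} h" using hy(1) arc_imp_path path_def by blast
    then have cT: "closed T" unfolding T_def
      by (rule continuous_closed_preimage[OF _ closed_atLeastAtMost cS])
    have h1: "h 1 = y" using hy(3) by (simp add: pathfinish_def)
    have yS: "y \<in> S" unfolding S_def using gS(2) pathstart_in_path_image by metis
    have 1: "1 \<in> T" unfolding T_def using h1 yS by auto
    define s where "s = Inf T"
    have bT: "bdd_below T" unfolding T_def by (meson bdd_below_Icc bdd_below_mono inf.cobounded1)
    have sT: "s \<in> T" unfolding s_def using 1 bT cT by (intro closed_contains_Inf) auto
    have s01: "s \<in> {0..1}" and hsS: "h s \<in> S" using sT unfolding T_def by auto
    have smin: "\<And>t. t \<in> {0..1} \<Longrightarrow> h t \<in> S \<Longrightarrow> s \<le> t"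
      unfolding s_def using bT by (intro cInf_lower) (auto simp: T_def)
    define z where "z = h s"
    obtain u where u: "u \<in> {0..1}" "g (Suc i) u = z" using hsS unfolding z_def S_def path_image_def by auto
    have i2: "i + 2 \<le> n" using lt by simp
    have xS: "x \<notin> S" using F4[OF Suc.prems(1) i2] gS(4) Suc.prems(3) by auto
    have s0: "s \<noteq> 0" using xS hsS hy(2) unfolding pathstart_def by auto
    have zOi: "z \<in> interior (a i \<union> a (Suc i))" using hy(5) s01 unfolding z_def path_image_def by auto
    have zOs: "z \<in> interior (a (Suc i) \<union> a (Suc (Suc i)))" using hsS gS(4) unfolding z_def by auto
    have zA: "z \<in> interior (a (Suc i))" using F3[OF Suc.prems(1) i2] zOi zOs by auto
    have p2: "p (Suc (Suc i)) \<in> interior (a (Suc (Suc i)))"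
    proof (cases "Suc (Suc i) = n")
      case True then show ?thesis using gp(2) qn by simp
    next
      case False then show ?thesis using gp(3) lt by auto
    qed
    have u1: "u \<noteq> 1"
    proof
      assume "u = 1"
      then have "z = p (Suc (Suc i))" using u gS(3) unfolding pathfinish_def by simp
      then show False using F5[OF Suc.prems(1) i2] zOi p2 by auto
    qed
    define g' where "g' = (\<lambda>j. if j = i then subpath 0 s h else if j = Suc i then subpath u 1 (g (Suc i)) else g j)"
    define p' where "p' = (\<lambda>j. if j = i then x else if j = Suc i then z else p j)"
    have A1: "arc (g' i) \<and> pathstart (g' i) = p' i \<and> pathfinish (g' i) = p' (Suc i)
          \<and> p' i \<in> interior (a i) \<and> path_image (g' i) \<subseteq> interior (a i \<union> a (Suc i))"
    proof -
      have "arc (subpath 0 s h)" by (rule arc_subpath_arc) (use hy(1) s01 s0 in auto)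
      moreover have "pathstart (subpath 0 s h) = x" using hy(2) by (simp add: pathstart_def subpath_def)
      moreover have "pathfinish (subpath 0 s h) = z" by (simp add: z_def)
      moreover have "path_image (subpath 0 s h) \<subseteq> interior (a i \<union> a (Suc i))"
        using path_image_subpath_subset[of 0 s h] s01 hy(5) by auto
      ultimately show ?thesis unfolding g'_def p'_def using Suc.prems(3) by simp
    qed
    have A2: "arc (g' (Suc i)) \<and> pathstart (g' (Suc i)) = p' (Suc i) \<and> pathfinish (g' (Suc i)) = p' (Suc (Suc i))
          \<and> p' (Suc i) \<in> interior (a (Suc i)) \<and> path_image (g' (Suc i)) \<subseteq> interior (a (Suc i) \<union> a (Suc (Suc i)))"
    proof -
      have "arc (subpath u 1 (g (Suc i)))" by (rule arc_subpath_arc) (use gS(1) u u1 in auto)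
      moreover have "pathstart (subpath u 1 (g (Suc i))) = z" using u by simp
      moreover have "pathfinish (subpath u 1 (g (Suc i))) = p (Suc (Suc i))" using gS(3) by (simp add: pathfinish_def subpath_def)
      moreover have "path_image (subpath u 1 (g (Suc i))) \<subseteq> interior (a (Suc i) \<union> a (Suc (Suc i)))"
        using path_image_subpath_subset[of u 1 "g (Suc i)"] u gS(4) unfolding S_def by auto
      ultimately show ?thesis unfolding g'_def p'_def using zA by simp
    qed
    have A3: "\<And>j. j \<in> {Suc (Suc i)..<n} \<Longrightarrow> arc (g' j) \<and> pathstart (g' j) = p' j \<and> pathfinish (g' j) = p' (Suc j)
          \<and> p' j \<in> interior (a j) \<and> path_image (g' j) \<subseteq> interior (a j \<union> a (Suc j))"
      unfolding g'_def p'_def using gp(3) by auto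
    have B1: "path_image (g' i) \<inter> path_image (g' (Suc i)) \<subseteq> {p' (Suc i)}"
    proof
      fix w assume w: "w \<in> path_image (g' i) \<inter> path_image (g' (Suc i))"
      then obtain t where t: "t \<in> {0..s}" "w = h t" unfolding g'_def
        using s01 by (auto simp: path_image_subpath)
      have "w \<in> S" using w u path_image_subpath_subset[of u 1 "g (Suc i)"] unfolding g'_def S_def by auto
      then have "s \<le> t" using smin[of t] t s01 by auto
      then show "w \<in> {p' (Suc i)}" using t unfolding p'_def z_def by auto
    qed
    have B2: "Suc (Suc i) < n \<Longrightarrow> path_image (g' (Suc i)) \<inter> path_image (g' (Suc (Suc i))) \<subseteq> {p' (Suc (Suc i))}"
      unfolding g'_def p'_def using gp(4)[rule_format, of "Suc i"] u path_image_subpath_subset[of u 1 "g (Suc i)"]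
      by auto
    have B3: "\<And>j. Suc (Suc i) \<le> j \<Longrightarrow> Suc j < n \<Longrightarrow> path_image (g' j) \<inter> path_image (g' (Suc j)) \<subseteq> {p' (Suc j)}"
      unfolding g'_def p'_def using gp(4) by auto
    have P1: "p' i = x" unfolding p'_def by simp
    have P2: "p' n = qn" unfolding p'_def using gp(2) lt by auto
    have C1: "\<forall>j\<in>{i..<n}. arc (g' j) \<and> pathstart (g' j) = p' j \<and> pathfinish (g' j) = p' (Suc j)
          \<and> p' j \<in> interior (a j) \<and> path_image (g' j) \<subseteq> interior (a j \<union> a (Suc j))"
    proof
      fix j assume j: "j \<in> {i..<n}"
      show "arc (g' j) \<and> pathstart (g' j) = p' j \<and> pathfinish (g' j) = p' (Suc j)
          \<and> p' j \<in> interior (a j) \<and> path_image (g' j) \<subseteq> interior (a j \<union> a (Suc j))"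
      proof (cases "j = i")
        case True then show ?thesis using A1 by simp
      next
        case False
        show ?thesis
        proof (cases "j = Suc i")
          case True then show ?thesis using A2 by simp
        next
          case False then show ?thesis using A3 j \<open>j \<noteq> i\<close> by auto
        qed
      qed
    qed
    have C2: "\<forall>j. i \<le> j \<and> Suc j < n \<longrightarrow> path_image (g' j) \<inter> path_image (g' (Suc j)) \<subseteq> {p' (Suc j)}"
    proof (intro allI impI)
      fix j assume j: "i \<le> j \<and> Suc j < n"
      show "path_image (g' j) \<inter> path_image (g' (Suc j)) \<subseteq> {p' (Suc j)}"
      proof (cases "j = i")
        case True then show ?thesis using B1 by simp
      next
        case False
        show ?thesis
        proof (cases "j = Suc i")
          case True then show ?thesis using B2 j by simp
        next
          case False then show ?thesis using B3 j \<open>j \<noteq> i\<close> by auto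
        qed
      qed
    qed
    show ?case
      apply (rule exI[of _ g'], rule exI[of _ p'])
      using P1 P2 C1 C2 by blast
  qed
  obtain g p where gp: "p 1 = q1" "p n = qn"
       "\<forall>j\<in>{1..<n}. arc (g j) \<and> pathstart (g j) = p j \<and> pathfinish (g j) = p (Suc j)
          \<and> p j \<in> interior (a j) \<and> path_image (g j) \<subseteq> interior (a j \<union> a (Suc j))"
       "\<forall>j. 1 \<le> j \<and> Suc j < n \<longrightarrow> path_image (g j) \<inter> path_image (g (Suc j)) \<subseteq> {p (Suc j)}"
    using Q[of 1 q1] n1 q1 by auto
  have far: "\<forall>j k. 1 \<le> j \<and> Suc j < k \<and> k < n \<longrightarrow> path_image (g j) \<inter> path_image (g k) = {}"
  proof (intro allI impI)
    fix j k assume h: "1 \<le> j \<and> Suc j < k \<and> k < n"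
    have "path_image (g j) \<subseteq> interior (a j \<union> a (Suc j))" "path_image (g k) \<subseteq> interior (a k \<union> a (Suc k))"
      using gp(3) h by auto
    then show "path_image (g j) \<inter> path_image (g k) = {}" using F2[of j k] h by auto
  qed
  have "arc (joinpaths_list (map g [1..<n]))"
    using jl_props[of 1 n g p] n1 gp(3,4) far by auto
  then show ?thesis using gp by blast
qed
end
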